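(* Let $n$ be even and $F\colon\mathbb F_2^n\to\mathbb F_2^n$ a quadratic APN function with linearity $2^{\frac{n+k}{2}}$, and assume $F$ has a component function with amplitude $2^{\frac{n+\ell}{2}}$ where $2\le\ell<n-k$ and $\ell\ne k$. Then $|N_F|\ge 2^k+2^\ell+1$.
   Context: $\langle\cdot,\cdot\rangle$ is the standard dot product. $F$ is APN if for every $a\ne0$ and $c$, $F(x)+F(x+a)=c$ has at most 2 solutions; quadratic if each component $F_b(x)=\langle b,F(x)\rangle$ is a quadratic form plus an affine function. $W_F(b,a)=\sum_x(-1)^{F_b(x)+\langle x,a\rangle}$; linearity $L(F)=\max_{a,\,b\ne0}|W_F(b,a)|$. For quadratic $F$ and fixed $b$ there is $k'$ with $|W_F(b,a)|\in\{0,2^{(n+k')/2}\}$ for all $a$; $2^{(n+k')/2}$ is the amplitude of $F_b$; $F_b$ is bent if its amplitude is $2^{n/2}$. $N_F=\{b\in\mathbb F_2^n\setminus\{0\}\colon F_b\text{ not bent}\}$. *)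

theory Defs
  imports Complex_Main "HOL-Library.Cardinality"
begin

text \<open>Vectors of F_2^n are modelled as functions 'n \<Rightarrow> bool over a finite index
type 'n with n = CARD('n); True = 1, addition is pointwise xor.\<close>

definition vzero :: "'n::finite \<Rightarrow> bool" where
  "vzero = (\<lambda>_. False)"

definition vadd :: "('n::finite \<Rightarrow> bool) \<Rightarrow> ('n \<Rightarrow> bool) \<Rightarrow> ('n \<Rightarrow> bool)" where
  "vadd x y = (\<lambda>i. x i \<noteq> y i)"

definition dotp :: "('n::finite \<Rightarrow> bool) \<Rightarrow> ('n \<Rightarrow> bool) \<Rightarrow> bool" where
  "dotp a x = odd (card {i. a i \<and> x i})"

definition comp :: "(('n::finite \<Rightarrow> bool) \<Rightarrow> ('n \<Rightarrow> bool)) \<Rightarrow> ('n \<Rightarrow> bool) \<Rightarrow> ('n \<Rightarrow> bool) \<Rightarrow> bool" where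
  "comp F b x = dotp b (F x)"

definition APN :: "(('n::finite \<Rightarrow> bool) \<Rightarrow> ('n \<Rightarrow> bool)) \<Rightarrow> bool" where
  "APN F \<longleftrightarrow> (\<forall>a c. a \<noteq> vzero \<longrightarrow> card {x. vadd (F x) (F (vadd x a)) = c} \<le> 2)"

definition quadratic :: "(('n::finite \<Rightarrow> bool) \<Rightarrow> ('n \<Rightarrow> bool)) \<Rightarrow> bool" where
  "quadratic F \<longleftrightarrow> (\<forall>b. \<exists>Q d e. \<forall>x.
      comp F b x = ((odd (card {(i,j). Q i j \<and> x i \<and> x j}) \<noteq> dotp d x) \<noteq> e))"

definition walsh :: "(('n::finite \<Rightarrow> bool) \<Rightarrow> ('n \<Rightarrow> bool)) \<Rightarrow> ('n \<Rightarrow> bool) \<Rightarrow> ('n \<Rightarrow> bool) \<Rightarrow> int" where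
  "walsh F b a = (\<Sum>x\<in>UNIV. (if comp F b x \<noteq> dotp x a then -1 else 1))"

definition linearity :: "(('n::finite \<Rightarrow> bool) \<Rightarrow> ('n \<Rightarrow> bool)) \<Rightarrow> int" where
  "linearity F = Max {\<bar>walsh F b a\<bar> | a b. b \<noteq> vzero}"

text \<open>Amplitude of F_b: the common nonzero value of |W_F(b,a)| (for quadratic F),
i.e. the maximum over a.\<close>
definition amplitude :: "(('n::finite \<Rightarrow> bool) \<Rightarrow> ('n \<Rightarrow> bool)) \<Rightarrow> ('n \<Rightarrow> bool) \<Rightarrow> int" where
  "amplitude F b = Max {\<bar>walsh F b a\<bar> | a. True}"

definition bent_comp :: "(('n::finite \<Rightarrow> bool) \<Rightarrow> ('n \<Rightarrow> bool)) \<Rightarrow> ('n \<Rightarrow> bool) \<Rightarrow> bool" where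
  "bent_comp F b \<longleftrightarrow> real_of_int (amplitude F b) = 2 powr (real (CARD('n)) / 2)"

definition NF :: "(('n::finite \<Rightarrow> bool) \<Rightarrow> ('n \<Rightarrow> bool)) \<Rightarrow> ('n \<Rightarrow> bool) set" where
  "NF F = {b. b \<noteq> vzero \<and> \<not> bent_comp F b}"

end

theory Submission
  imports Defs
begin

definition sg :: "bool \<Rightarrow> int" where "sg p = (if p then -1 else 1)"

lemma sg_xor: "sg (p \<noteq> q) = sg p * sg q" by (auto simp: sg_def)

lemma vadd_comm: "vadd x y = vadd y x" unfolding vadd_def by auto
lemma vadd_self: "vadd x x = vzero" unfolding vadd_def vzero_def by auto
lemma vadd_zero[simp]: "vadd x vzero = x" "vadd vzero x = x" unfolding vadd_def vzero_def by auto
lemma vadd_cancel[simp]: "vadd (vadd x y) y = x" unfolding vadd_def by auto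
lemma vadd_eq_zero_iff: "vadd x y = vzero \<longleftrightarrow> x = y" unfolding vadd_def vzero_def by (auto simp: fun_eq_iff)
lemma vadd_left_cancel[simp]: "vadd x y = vadd x z \<longleftrightarrow> y = z" by (auto simp: vadd_def fun_eq_iff)

lemma dotp_comm: "dotp a x = dotp x a" unfolding dotp_def by (simp add: conj_commute)

lemma dotp_add2: "dotp d (vadd u v) = (dotp d u \<noteq> dotp d v)"
proof -
  let ?A = "{i. d i \<and> u i}" and ?B = "{i. d i \<and> v i}"
  have e: "{i. d i \<and> vadd u v i} = (?A - ?B) \<union> (?B - ?A)" by (auto simp: vadd_def)
  have c1: "card ((?A - ?B) \<union> (?B - ?A)) = card (?A - ?B) + card (?B - ?A)" by (rule card_Un_disjoint) auto
  have c2: "card ?A = card (?A - ?B) + card (?A \<inter> ?B)"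
  proof -
    have "card ((?A - ?B) \<union> (?A \<inter> ?B)) = card (?A - ?B) + card (?A \<inter> ?B)" by (rule card_Un_disjoint) auto
    moreover have "(?A - ?B) \<union> (?A \<inter> ?B) = ?A" by auto
    ultimately show ?thesis by simp
  qed
  have c3: "card ?B = card (?B - ?A) + card (?A \<inter> ?B)"
  proof -
    have "card ((?B - ?A) \<union> (?A \<inter> ?B)) = card (?B - ?A) + card (?A \<inter> ?B)" by (rule card_Un_disjoint) auto
    moreover have "(?B - ?A) \<union> (?A \<inter> ?B) = ?B" by auto
    ultimately show ?thesis by simp
  qed
  show ?thesis unfolding dotp_def e c1 c2 c3 by auto
qed

lemma dotp_add1: "dotp (vadd u v) d = (dotp u d \<noteq> dotp v d)"
  by (metis dotp_comm dotp_add2)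

lemma dotp_zero[simp]: "dotp d vzero = False" "dotp vzero d = False"
  unfolding dotp_def vzero_def by auto

lemma dotp_unit: "dotp (\<lambda>j. j = i) y = y i"
proof -
  have "{j. j = i \<and> y j} = (if y i then {i} else {})" by auto
  then show ?thesis unfolding dotp_def by auto
qed

lemma card_vec: "card (UNIV :: ('n::finite \<Rightarrow> bool) set) = 2 ^ CARD('n)"
  by (simp add: card_fun)

lemma sum_shift: "(\<Sum>y\<in>UNIV. \<phi> y) = (\<Sum>a\<in>(UNIV::('n::finite \<Rightarrow> bool) set). \<phi> (vadd x a))"
proof -
  have "inj (vadd x)" by (auto simp: inj_on_def)
  moreover have "range (vadd x) = UNIV"
  proof -
    have "y = vadd x (vadd x y)" for y by (auto simp: vadd_def fun_eq_iff)
    then show ?thesis by (metis surj_def)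
  qed
  ultimately show ?thesis using sum.reindex[of "vadd x" UNIV \<phi>] by (simp add: comp_def)
qed

lemma char_sum:
  fixes S :: "('n::finite \<Rightarrow> bool) set"
  assumes "\<forall>x\<in>S. \<forall>y\<in>S. vadd x y \<in> S"
    and "\<forall>x\<in>S. \<forall>y\<in>S. g (vadd x y) = (g x \<noteq> g y)"
  shows "(\<Sum>x\<in>S. sg (g x)) = (if \<forall>x\<in>S. \<not> g x then int (card S) else 0)"
proof (cases "\<forall>x\<in>S. \<not> g x")
  case True
  then show ?thesis by (simp add: sg_def)
next
  case False
  then obtain x0 where x0: "x0 \<in> S" "g x0" by auto
  have bij: "bij_betw (\<lambda>x. vadd x x0) S S" unfolding bij_betw_def
  proof
    show "inj_on (\<lambda>x. vadd x x0) S" by (rule inj_onI) (metis vadd_cancel)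
    show "(\<lambda>x. vadd x x0) ` S = S"
    proof
      show "(\<lambda>x. vadd x x0) ` S \<subseteq> S" using assms(1) x0 by auto
      show "S \<subseteq> (\<lambda>x. vadd x x0) ` S"
      proof
        fix y assume "y \<in> S"
        then have "vadd y x0 \<in> S" using assms(1) x0 by auto
        moreover have "y = vadd (vadd y x0) x0" by simp
        ultimately show "y \<in> (\<lambda>x. vadd x x0) ` S" by blast
      qed
    qed
  qed
  have "(\<Sum>x\<in>S. sg (g x)) = (\<Sum>x\<in>S. sg (g (vadd x x0)))"
    using sum.reindex_bij_betw[OF bij, of "\<lambda>x. sg (g x)"] by simp
  also have "\<dots> = (\<Sum>x\<in>S. - sg (g x))"
    using assms(2) x0 by (intro sum.cong) (auto simp: sg_def)
  also have "\<dots> = - (\<Sum>x\<in>S. sg (g x))" by (simp add: sum_negf)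
  finally show ?thesis using False by auto
qed

lemma sum_dotp: "(\<Sum>d\<in>UNIV. sg (dotp d y)) = (if y = vzero then 2 ^ CARD('n) else (0::int))"
  for y :: "'n::finite \<Rightarrow> bool"
proof -
  have "(\<Sum>d\<in>UNIV. sg (dotp d y)) = (if \<forall>d\<in>UNIV. \<not> dotp d y then int (card (UNIV::('n \<Rightarrow> bool) set)) else 0)"
    by (rule char_sum) (auto simp: dotp_add1)
  moreover have "(\<forall>d\<in>UNIV. \<not> dotp d y) \<longleftrightarrow> y = vzero"
  proof
    assume h: "\<forall>d\<in>UNIV. \<not> dotp d y"
    show "y = vzero"
    proof (rule ext)
      fix i show "y i = vzero i" using h[rule_format, of "\<lambda>j. j = i"] by (simp add: dotp_unit vzero_def)
    qed
  qed auto
  ultimately show ?thesis by (simp add: card_vec)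
qed

definition Dv :: "(('n::finite \<Rightarrow> bool) \<Rightarrow> bool) \<Rightarrow> ('n \<Rightarrow> bool) \<Rightarrow> ('n \<Rightarrow> bool) \<Rightarrow> bool" where
  "Dv g a x = ((g (vadd x a) \<noteq> g x) \<noteq> (g a \<noteq> g vzero))"

definition Vs :: "(('n::finite \<Rightarrow> bool) \<Rightarrow> bool) \<Rightarrow> ('n \<Rightarrow> bool) set" where
  "Vs g = {a. \<forall>x. \<not> Dv g a x}"

definition deg2 :: "(('n::finite \<Rightarrow> bool) \<Rightarrow> bool) \<Rightarrow> bool" where
  "deg2 g \<longleftrightarrow> (\<forall>a x y. Dv g a (vadd x y) = (Dv g a x \<noteq> Dv g a y))"

lemma Vs_zero: "vzero \<in> Vs g"
  unfolding Vs_def Dv_def by simp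

lemma Vs_add:
  assumes "a \<in> Vs g" "b \<in> Vs g" shows "vadd a b \<in> Vs g"
  unfolding Vs_def
proof (intro CollectI allI)
  fix x
  have 1: "\<not> Dv g a (vadd x b)" and 2: "\<not> Dv g b x" and 3: "\<not> Dv g a b"
    using assms unfolding Vs_def by auto
  have e1: "vadd (vadd x b) a = vadd x (vadd a b)" by (auto simp: vadd_def fun_eq_iff)
  have e2: "vadd b a = vadd a b" by (rule vadd_comm)
  show "\<not> Dv g (vadd a b) x"
    using 1 2 3 unfolding Dv_def e1 e2 by auto
qed

lemma Dv_comp_zero: "\<not> Dv (comp F vzero) a x"
  unfolding Dv_def comp_def by simp

lemma qf_deg2:
  fixes Q :: "'n::finite \<Rightarrow> 'n \<Rightarrow> bool"
  shows "deg2 (\<lambda>x. odd (card {(i,j). Q i j \<and> x i \<and> x j}))"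
  unfolding deg2_def
proof (intro allI)
  fix a x y :: "'n::finite \<Rightarrow> bool"
  define c where "c z = card {(i,j). Q i j \<and> z i \<and> z j}" for z :: "'n \<Rightarrow> bool"
  define ind where "ind z p = (if Q (fst p) (snd p) \<and> z (fst p) \<and> z (snd p) then 1 else (0::nat))" for z :: "'n \<Rightarrow> bool" and p
  have cs: "c z = (\<Sum>p\<in>UNIV. ind z p)" for z
  proof -
    have "{(i,j). Q i j \<and> z i \<and> z j} = {p \<in> UNIV. Q (fst p) (snd p) \<and> z (fst p) \<and> z (snd p)}" by auto
    then have "c z = card {p \<in> UNIV. Q (fst p) (snd p) \<and> z (fst p) \<and> z (snd p)}" unfolding c_def by simp
    also have "\<dots> = (\<Sum>p\<in>{p \<in> UNIV. Q (fst p) (snd p) \<and> z (fst p) \<and> z (snd p)}. 1)" by simp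
    also have "\<dots> = (\<Sum>p\<in>UNIV. ind z p)" unfolding ind_def by (rule sum.inter_filter) simp
    finally show ?thesis .
  qed
  have ev: "even (c (vadd (vadd x y) a) + c (vadd x y) + c (vadd x a) + c (vadd y a) + c x + c y + c a + c vzero)"
  proof -
    have "c (vadd (vadd x y) a) + c (vadd x y) + c (vadd x a) + c (vadd y a) + c x + c y + c a + c vzero
      = (\<Sum>p\<in>UNIV. ind (vadd (vadd x y) a) p + ind (vadd x y) p + ind (vadd x a) p + ind (vadd y a) p + ind x p + ind y p + ind a p + ind vzero p)"
      unfolding cs by (simp add: sum.distrib)
    also have "even \<dots>"
    proof (rule dvd_sum)
      fix p :: "'n \<times> 'n"
      obtain i j where p: "p = (i,j)" by (cases p)
      show "2 dvd (ind (vadd (vadd x y) a) p + ind (vadd x y) p + ind (vadd x a) p + ind (vadd y a) p + ind x p + ind y p + ind a p + ind vzero p)"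
        unfolding p ind_def vadd_def vzero_def
        by (cases "Q i j"; cases "x i"; cases "y i"; cases "a i"; cases "x j"; cases "y j"; cases "a j"; simp)
    qed
    finally show ?thesis .
  qed
  have e1: "vadd (vadd x y) a = vadd (vadd x y) a" by simp
  show "Dv (\<lambda>x. odd (card {(i, j). Q i j \<and> x i \<and> x j})) a (vadd x y) =
        (Dv (\<lambda>x. odd (card {(i, j). Q i j \<and> x i \<and> x j})) a x \<noteq> Dv (\<lambda>x. odd (card {(i, j). Q i j \<and> x i \<and> x j})) a y)"
    using ev unfolding Dv_def c_def[symmetric] by auto
qed

lemma deg2_xor_lin:
  assumes "deg2 q" shows "deg2 (\<lambda>x. (q x \<noteq> dotp d x) \<noteq> e)"
proof -
  have "Dv (\<lambda>x. (q x \<noteq> dotp d x) \<noteq> e) a x = Dv q a x" for a x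
    unfolding Dv_def by (auto simp: dotp_add2)
  then show ?thesis using assms unfolding deg2_def by simp
qed

lemma quad_deg2: assumes "quadratic F" shows "deg2 (comp F b)"
proof -
  obtain Q d e where h: "\<forall>x. comp F b x = ((odd (card {(i,j). Q i j \<and> x i \<and> x j}) \<noteq> dotp d x) \<noteq> e)"
    using assms unfolding quadratic_def by blast
  then have "comp F b = (\<lambda>x. (odd (card {(i,j). Q i j \<and> x i \<and> x j}) \<noteq> dotp d x) \<noteq> e)" by auto
  then show ?thesis using deg2_xor_lin[OF qf_deg2] by simp
qed

lemma inner_sum:
  fixes g :: "('n::finite \<Rightarrow> bool) \<Rightarrow> bool"
  assumes "deg2 g"
  shows "(\<Sum>x\<in>UNIV. sg (Dv g a x)) = (if a \<in> Vs g then 2 ^ CARD('n) else 0)"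
proof -
  have "(\<Sum>x\<in>UNIV. sg (Dv g a x)) = (if \<forall>x\<in>UNIV. \<not> Dv g a x then int (card (UNIV::('n \<Rightarrow> bool) set)) else 0)"
    by (rule char_sum) (use assms in \<open>auto simp: deg2_def\<close>)
  then show ?thesis by (simp add: Vs_def card_vec)
qed

lemma h_add:
  assumes "a \<in> Vs f" "a' \<in> Vs f"
  shows "(dotp (vadd a a') u \<noteq> (f (vadd a a') \<noteq> f vzero)) = ((dotp a u \<noteq> (f a \<noteq> f vzero)) \<noteq> (dotp a' u \<noteq> (f a' \<noteq> f vzero)))"
proof -
  have "\<not> Dv f a a'" using assms(1) unfolding Vs_def by auto
  then have "(f (vadd a a') \<noteq> f a') = (f a \<noteq> f vzero)" unfolding Dv_def by (simp add: vadd_comm)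
  then show ?thesis by (auto simp: dotp_add1)
qed

lemma walsh_sq:
  fixes F :: "('n::finite \<Rightarrow> bool) \<Rightarrow> ('n \<Rightarrow> bool)"
  assumes d: "deg2 (comp F b)"
  shows "(walsh F b u)^2 = 2 ^ CARD('n) * (if \<forall>a\<in>Vs (comp F b). \<not> (dotp a u \<noteq> (comp F b a \<noteq> comp F b vzero)) then int (card (Vs (comp F b))) else 0)"
proof -
  define f where "f = comp F b"
  define V where "V = Vs f"
  define h where "h a = (dotp a u \<noteq> (f a \<noteq> f vzero))" for a :: "'n \<Rightarrow> bool"
  have df: "deg2 f" using d f_def by simp
  have w: "walsh F b u = (\<Sum>x\<in>UNIV. sg (f x \<noteq> dotp x u))" unfolding walsh_def sg_def f_def by simp
  have pw: "sg (f x \<noteq> dotp x u) * sg (f (vadd x a) \<noteq> dotp (vadd x a) u) = sg (h a) * sg (Dv f a x)" for x a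
    unfolding h_def Dv_def by (auto simp: sg_def dotp_add1)
  have "(walsh F b u)^2 = (\<Sum>x\<in>UNIV. \<Sum>y\<in>UNIV. sg (f x \<noteq> dotp x u) * sg (f y \<noteq> dotp y u))"
    unfolding w power2_eq_square by (rule sum_product)
  also have "\<dots> = (\<Sum>x\<in>UNIV. \<Sum>a\<in>UNIV. sg (f x \<noteq> dotp x u) * sg (f (vadd x a) \<noteq> dotp (vadd x a) u))"
    by (rule sum.cong[OF refl], rule sum_shift)
  also have "\<dots> = (\<Sum>a\<in>UNIV. \<Sum>x\<in>UNIV. sg (h a) * sg (Dv f a x))"
    unfolding pw by (rule sum.swap)
  also have "\<dots> = (\<Sum>a\<in>UNIV. sg (h a) * (if a \<in> V then 2 ^ CARD('n) else 0))"
    unfolding sum_distrib_left[symmetric] inner_sum[OF df] V_def by simp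
  also have "\<dots> = (\<Sum>a\<in>UNIV. if a \<in> V then 2 ^ CARD('n) * sg (h a) else 0)"
    by (intro sum.cong refl) auto
  also have "\<dots> = (\<Sum>a\<in>{a\<in>UNIV. a \<in> V}. 2 ^ CARD('n) * sg (h a))"
    by (rule sum.inter_filter[symmetric]) simp
  also have "\<dots> = 2 ^ CARD('n) * (\<Sum>a\<in>V. sg (h a))"
    by (simp add: sum_distrib_left)
  finally have W: "(walsh F b u)^2 = 2 ^ CARD('n) * (\<Sum>a\<in>V. sg (h a))" .
  have hadd: "\<forall>x\<in>V. \<forall>y\<in>V. h (vadd x y) = (h x \<noteq> h y)"
    unfolding h_def V_def using h_add by blast
  have vadd': "\<forall>x\<in>V. \<forall>y\<in>V. vadd x y \<in> V" unfolding V_def using Vs_add by blast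
  have "(\<Sum>a\<in>V. sg (h a)) = (if \<forall>a\<in>V. \<not> h a then int (card V) else 0)"
    by (rule char_sum[OF vadd' hadd])
  then show ?thesis using W unfolding V_def h_def f_def by simp
qed

lemma walsh_exists:
  fixes F :: "('n::finite \<Rightarrow> bool) \<Rightarrow> ('n \<Rightarrow> bool)"
  assumes d: "deg2 (comp F b)"
  shows "\<exists>u. \<forall>a\<in>Vs (comp F b). \<not> (dotp a u \<noteq> (comp F b a \<noteq> comp F b vzero))"
proof (rule ccontr)
  define f where "f = comp F b"
  define V where "V = Vs f"
  assume "\<not> ?thesis"
  then have nh: "\<forall>u. \<exists>a\<in>V. dotp a u \<noteq> (f a \<noteq> f vzero)" unfolding f_def V_def by auto
  have each: "(\<Sum>a\<in>V. sg (dotp a u \<noteq> (f a \<noteq> f vzero))) = 0" for u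
  proof -
    have "(\<Sum>a\<in>V. sg (dotp a u \<noteq> (f a \<noteq> f vzero))) = (if \<forall>a\<in>V. \<not> (dotp a u \<noteq> (f a \<noteq> f vzero)) then int (card V) else 0)"
    proof (rule char_sum)
      show "\<forall>x\<in>V. \<forall>y\<in>V. vadd x y \<in> V" unfolding V_def using Vs_add by blast
      show "\<forall>x\<in>V. \<forall>y\<in>V. (dotp (vadd x y) u \<noteq> (f (vadd x y) \<noteq> f vzero)) = ((dotp x u \<noteq> (f x \<noteq> f vzero)) \<noteq> (dotp y u \<noteq> (f y \<noteq> f vzero)))"
        unfolding V_def using h_add by blast
    qed
    then show ?thesis using nh by auto
  qed
  have "0 = (\<Sum>u\<in>UNIV. \<Sum>a\<in>V. sg (dotp a u \<noteq> (f a \<noteq> f vzero)))" using each by simp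
  also have "\<dots> = (\<Sum>a\<in>V. \<Sum>u\<in>UNIV. sg (dotp a u \<noteq> (f a \<noteq> f vzero)))" by (rule sum.swap)
  also have "\<dots> = (\<Sum>a\<in>V. sg (f a \<noteq> f vzero) * (\<Sum>u\<in>UNIV. sg (dotp u a)))"
  proof (rule sum.cong[OF refl])
    fix a
    have "sg (dotp a u \<noteq> (f a \<noteq> f vzero)) = sg (f a \<noteq> f vzero) * sg (dotp u a)" for u
      by (auto simp: sg_def dotp_comm[of a u])
    then show "(\<Sum>u\<in>UNIV. sg (dotp a u \<noteq> (f a \<noteq> f vzero))) = sg (f a \<noteq> f vzero) * (\<Sum>u\<in>UNIV. sg (dotp u a))"
      by (simp add: sum_distrib_left)
  qed
  also have "\<dots> = (\<Sum>a\<in>V. if a = vzero then sg (f a \<noteq> f vzero) * 2 ^ CARD('n) else 0)"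
    unfolding sum_dotp by (intro sum.cong refl) auto
  also have "\<dots> = 2 ^ CARD('n)" using Vs_zero[of f] by (simp add: V_def sg_def)
  finally show False by simp
qed

lemma amp_sq:
  fixes F :: "('n::finite \<Rightarrow> bool) \<Rightarrow> ('n \<Rightarrow> bool)"
  assumes d: "deg2 (comp F b)"
  shows "(amplitude F b)^2 = 2 ^ CARD('n) * int (card (Vs (comp F b)))"
proof -
  define S where "S = {\<bar>walsh F b a\<bar> | a. True}"
  have S: "S = range (\<lambda>a. \<bar>walsh F b a\<bar>)" unfolding S_def by auto
  have fin: "finite S" "S \<noteq> {}" unfolding S by auto
  have am: "amplitude F b = Max S" unfolding amplitude_def S_def ..
  have "Max S \<in> S" by (rule Max_in[OF fin])
  then obtain u0 where "Max S = \<bar>walsh F b u0\<bar>" unfolding S by blast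
  then have u0: "amplitude F b = \<bar>walsh F b u0\<bar>" using am by simp
  obtain u1 where u1: "\<forall>a\<in>Vs (comp F b). \<not> (dotp a u1 \<noteq> (comp F b a \<noteq> comp F b vzero))"
    using walsh_exists[OF d] by blast
  have w1: "(walsh F b u1)^2 = 2 ^ CARD('n) * int (card (Vs (comp F b)))"
    using walsh_sq[OF d, of u1] u1 by simp
  have cpos: "card (Vs (comp F b)) \<ge> 1"
    using Vs_zero[of "comp F b"] by (metis One_nat_def Suc_leI card_gt_0_iff empty_iff finite)
  then have "(walsh F b u1)^2 > 0" unfolding w1 by simp
  then have "walsh F b u1 \<noteq> 0" by auto
  moreover have "\<bar>walsh F b u1\<bar> \<le> amplitude F b" unfolding am using fin S by (intro Max_ge) auto
  ultimately have "amplitude F b \<noteq> 0" by auto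
  then have "(walsh F b u0)^2 \<noteq> 0" using u0 by auto
  moreover have "(amplitude F b)^2 = (walsh F b u0)^2" using u0 by simp
  ultimately show ?thesis using walsh_sq[OF d, of u0] by (simp split: if_splits)
qed

lemma count2:
  fixes F :: "('n::finite \<Rightarrow> bool) \<Rightarrow> ('n \<Rightarrow> bool)"
  assumes q: "\<forall>d. deg2 (comp F d)" and apn: "APN F" and a: "a \<noteq> vzero"
  shows "card {d. a \<in> Vs (comp F d)} = 2"
proof -
  define L where "L x = vadd (vadd (F (vadd x a)) (F x)) (vadd (F a) (F vzero))" for x
  have key: "Dv (comp F d) a x = dotp d (L x)" for d x
    unfolding Dv_def comp_def L_def by (simp add: dotp_add2)
  have s1: "(\<Sum>d\<in>UNIV. \<Sum>x\<in>UNIV. sg (Dv (comp F d) a x)) = 2 ^ CARD('n) * int (card {d. a \<in> Vs (comp F d)})"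
  proof -
    have "(\<Sum>d\<in>UNIV. \<Sum>x\<in>UNIV. sg (Dv (comp F d) a x)) = (\<Sum>d\<in>UNIV. if a \<in> Vs (comp F d) then 2 ^ CARD('n) else 0)"
    proof (rule sum.cong[OF refl])
      fix d show "(\<Sum>x\<in>UNIV. sg (Dv (comp F d) a x)) = (if a \<in> Vs (comp F d) then 2 ^ CARD('n) else 0)"
        using inner_sum[of "comp F d" a] q by simp
    qed
    also have "\<dots> = (\<Sum>d\<in>{d\<in>UNIV. a \<in> Vs (comp F d)}. 2 ^ CARD('n))"
      by (rule sum.inter_filter[symmetric]) simp
    finally show ?thesis by simp
  qed
  define LS where "LS = {x. vadd (F x) (F (vadd x a)) = vadd (F vzero) (F a)}"
  have LS: "{x. L x = vzero} = LS" unfolding LS_def L_def by (auto simp: vadd_def vzero_def fun_eq_iff)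
  have s2: "(\<Sum>d\<in>UNIV. \<Sum>x\<in>UNIV. sg (Dv (comp F d) a x)) = 2 ^ CARD('n) * int (card LS)"
  proof -
    have "(\<Sum>d\<in>UNIV. \<Sum>x\<in>UNIV. sg (Dv (comp F d) a x)) = (\<Sum>x\<in>UNIV. \<Sum>d\<in>UNIV. sg (dotp d (L x)))"
      unfolding key by (rule sum.swap)
    also have "\<dots> = (\<Sum>x\<in>UNIV. if L x = vzero then 2 ^ CARD('n) else 0)"
      unfolding sum_dotp ..
    also have "\<dots> = (\<Sum>x\<in>{x\<in>UNIV. L x = vzero}. 2 ^ CARD('n))"
      by (rule sum.inter_filter[symmetric]) simp
    finally show ?thesis using LS by simp
  qed
  have le: "card LS \<le> 2" using apn a unfolding APN_def LS_def by blast
  have "{vzero, a} \<subseteq> LS" unfolding LS_def by (auto simp: vadd_self vadd_comm)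
  then have "card {vzero, a} \<le> card LS" by (intro card_mono) auto
  then have "card LS = 2" using le a by auto
  then show ?thesis using s1 s2 by simp
qed

lemma exists_b:
  assumes q: "\<forall>d. deg2 (comp F d)" and apn: "APN F" and a: "a \<noteq> vzero"
  shows "\<exists>d. d \<noteq> vzero \<and> a \<in> Vs (comp F d)"
proof (rule ccontr)
  assume "\<not> ?thesis"
  then have "{d. a \<in> Vs (comp F d)} \<subseteq> {vzero}" by auto
  then have "card {d. a \<in> Vs (comp F d)} \<le> 1" by (metis card.empty card.insert card_mono empty_iff finite.intros(1) finite_insert One_nat_def)
  then show False using count2[OF q apn a] by simp
qed

lemma disj_b:
  assumes q: "\<forall>d. deg2 (comp F d)" and apn: "APN F" and a: "a \<noteq> vzero"
    and "a \<in> Vs (comp F b)" "a \<in> Vs (comp F c)" "b \<noteq> vzero" "c \<noteq> vzero"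
  shows "b = c"
proof (rule ccontr)
  assume bc: "b \<noteq> c"
  have z: "a \<in> Vs (comp F vzero)" unfolding Vs_def using Dv_comp_zero by auto
  have "{vzero, b, c} \<subseteq> {d. a \<in> Vs (comp F d)}" using assms z by auto
  then have "card {vzero, b, c} \<le> 2" using count2[OF q apn a] by (metis card_mono finite)
  then show False using bc assms by auto
qed

lemma powr_sq_int:
  fixes z :: int
  assumes "real_of_int z = 2 powr (real m / 2)"
  shows "z^2 = 2^m"
proof -
  have "real_of_int (z^2) = (2 powr (real m / 2))^2" using assms by simp
  also have "\<dots> = 2 powr (real m / 2) * 2 powr (real m / 2)" by (simp add: power2_eq_square)
  also have "\<dots> = 2 powr (real m / 2 + real m / 2)" by (rule powr_add[symmetric])
  also have "\<dots> = 2 powr (real m)" by simp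
  also have "\<dots> = (2::real)^m" by (simp add: powr_realpow)
  finally have "real_of_int (z^2) = real_of_int (2^m)" by simp
  then show ?thesis by (simp only: of_int_eq_iff)
qed

lemma amp_attained: "\<exists>u. amplitude F b = \<bar>walsh F b u\<bar>"
proof -
  define S where "S = {\<bar>walsh F b a\<bar> | a. True}"
  have S: "S = range (\<lambda>a. \<bar>walsh F b a\<bar>)" unfolding S_def by auto
  have fin: "finite S" "S \<noteq> {}" unfolding S by auto
  have am: "amplitude F b = Max S" unfolding amplitude_def S_def ..
  have "Max S \<in> S" by (rule Max_in[OF fin])
  then obtain u0 where "Max S = \<bar>walsh F b u0\<bar>" unfolding S by blast
  then show ?thesis using am by auto
qed

lemma amp_ge: "\<bar>walsh F b u\<bar> \<le> amplitude F b"
proof -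
  define S where "S = {\<bar>walsh F b a\<bar> | a. True}"
  have S: "S = range (\<lambda>a. \<bar>walsh F b a\<bar>)" unfolding S_def by auto
  have fin: "finite S" unfolding S by auto
  have am: "amplitude F b = Max S" unfolding amplitude_def S_def ..
  show ?thesis unfolding am using fin S by (intro Max_ge) auto
qed

lemma vadd_swap4: "vadd (vadd p q) (vadd p' q') = vadd (vadd p p') (vadd q q')"
  by (auto simp: vadd_def fun_eq_iff)

lemma vadd_aa: "vadd (vadd a u) (vadd a u') = vadd u u'"
  by (auto simp: vadd_def fun_eq_iff)

lemma vadd_inj2: "vadd x y = vadd x' y \<Longrightarrow> x = x'"
  by (metis vadd_cancel)

theorem mainTheorem9:
  fixes F :: "('n::finite \<Rightarrow> bool) \<Rightarrow> ('n \<Rightarrow> bool)" and k l :: nat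
  assumes "even CARD('n)"
    and "quadratic F" and "APN F"
    and "real_of_int (linearity F) = 2 powr ((real (CARD('n)) + real k) / 2)"
    and "\<exists>b. b \<noteq> vzero \<and> real_of_int (amplitude F b) = 2 powr ((real (CARD('n)) + real l) / 2)"
    and "2 \<le> l" and "l + k < CARD('n)" and "l \<noteq> k"
  shows "card (NF F) \<ge> 2 ^ k + 2 ^ l + 1"
proof -
  have q: "\<forall>d. deg2 (comp F d)" using quad_deg2 assms(2) by blast
  have apn: "APN F" by fact
  define Vb where "Vb b = Vs (comp F b)" for b
  have ampsq: "(amplitude F b)^2 = 2 ^ CARD('n) * int (card (Vb b))" for b
    unfolding Vb_def using amp_sq q by blast
  have ex: "\<And>x. x \<noteq> vzero \<Longrightarrow> \<exists>d. d \<noteq> vzero \<and> x \<in> Vb d"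
    unfolding Vb_def using exists_b[OF q apn] by blast
  have dj: "\<And>x b c. x \<noteq> vzero \<Longrightarrow> x \<in> Vb b \<Longrightarrow> x \<in> Vb c \<Longrightarrow> b \<noteq> vzero \<Longrightarrow> c \<noteq> vzero \<Longrightarrow> b = c"
    unfolding Vb_def using disj_b[OF q apn] by blast
  have Vz: "vzero \<in> Vb b" for b unfolding Vb_def by (rule Vs_zero)
  have Vadd: "x \<in> Vb b \<Longrightarrow> y \<in> Vb b \<Longrightarrow> vadd x y \<in> Vb b" for x y b unfolding Vb_def by (rule Vs_add)
  have inNF: "b \<in> NF F" if "b \<noteq> vzero" "card (Vb b) \<noteq> 1" for b
  proof -
    have "\<not> bent_comp F b"
    proof
      assume "bent_comp F b"
      then have "real_of_int (amplitude F b) = 2 powr (real (CARD('n)) / 2)" unfolding bent_comp_def .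
      then have "(amplitude F b)^2 = 2 ^ CARD('n)" by (rule powr_sq_int)
      then have "card (Vb b) = 1" using ampsq[of b] by simp
      then show False using that by simp
    qed
    then show ?thesis unfolding NF_def using that by simp
  qed
  define LS where "LS = {\<bar>walsh F b a\<bar> | a b. b \<noteq> vzero}"
  have LSeq: "LS = (\<lambda>(a,b). \<bar>walsh F b a\<bar>) ` {(a,b). b \<noteq> vzero}" unfolding LS_def by auto
  have one: "(\<lambda>_. True) \<noteq> (vzero :: 'n \<Rightarrow> bool)" by (auto simp: vzero_def fun_eq_iff)
  have finLS: "finite LS" "LS \<noteq> {}" unfolding LSeq using one by auto
  have lin: "linearity F = Max LS" unfolding linearity_def LS_def ..
  have "Max LS \<in> LS" by (rule Max_in[OF finLS])
  then obtain a0 b0 where b0: "b0 \<noteq> vzero" and lin0: "linearity F = \<bar>walsh F b0 a0\<bar>" unfolding LS_def lin by blast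
  have lin_ge: "\<bar>walsh F b a\<bar> \<le> linearity F" if "b \<noteq> vzero" for a b
    unfolding lin using finLS(1) that by (intro Max_ge) (auto simp: LS_def)
  have amp_le: "amplitude F b \<le> linearity F" if "b \<noteq> vzero" for b
    using amp_attained[of F b] lin_ge that by auto
  have "amplitude F b0 = linearity F"
    using amp_le[OF b0] amp_ge[of F b0 a0] lin0 by simp
  then have c0': "(linearity F)^2 = 2 ^ CARD('n) * int (card (Vb b0))" using ampsq[of b0] by simp
  have "real_of_int (linearity F) = 2 powr (real (CARD('n) + k) / 2)" using assms(4) by simp
  then have "(linearity F)^2 = 2 ^ (CARD('n) + k)" by (rule powr_sq_int)
  then have "2 ^ CARD('n) * int (card (Vb b0)) = 2 ^ CARD('n) * 2 ^ k" using c0' by (simp add: power_add)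
  then have c0: "card (Vb b0) = 2 ^ k" by simp
  obtain b1 where b1: "b1 \<noteq> vzero" and "real_of_int (amplitude F b1) = 2 powr ((real (CARD('n)) + real l) / 2)"
    using assms(5) by blast
  then have "real_of_int (amplitude F b1) = 2 powr (real (CARD('n) + l) / 2)" by simp
  then have "(amplitude F b1)^2 = 2 ^ (CARD('n) + l)" by (rule powr_sq_int)
  then have "2 ^ CARD('n) * int (card (Vb b1)) = 2 ^ CARD('n) * 2 ^ l" using ampsq[of b1] by (simp add: power_add)
  then have c1: "card (Vb b1) = 2 ^ l" by simp
  have "(amplitude F b1)^2 \<le> (linearity F)^2"
    using amp_le[OF b1] amp_attained[of F b1] by (metis abs_ge_zero power_mono)
  then have "card (Vb b1) \<le> card (Vb b0)" using ampsq[of b1] c0' by simp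
  have l4: "(4::nat) \<le> 2 ^ l"
    using power_increasing[OF assms(6), of "2::nat"] by simp
  have cb0: "card (Vb b0) \<noteq> 1" using \<open>card (Vb b1) \<le> card (Vb b0)\<close> c1 l4 by linarith
  have cb1: "card (Vb b1) \<noteq> 1" using c1 l4 by linarith
  have b01: "b0 \<noteq> b1"
  proof
    assume "b0 = b1"
    then have "(2::nat) ^ k = 2 ^ l" using c0 c1 by simp
    then show False using assms(8) by simp
  qed
  define W0 where "W0 = Vb b0"
  define W1 where "W1 = Vb b1"
  have W01: "W0 \<inter> W1 = {vzero}"
  proof
    show "W0 \<inter> W1 \<subseteq> {vzero}"
    proof
      fix x assume "x \<in> W0 \<inter> W1"
      then show "x \<in> {vzero}" using dj[of x b0 b1] b0 b1 b01 unfolding W0_def W1_def by auto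
    qed
    show "{vzero} \<subseteq> W0 \<inter> W1" using Vz unfolding W0_def W1_def by auto
  qed
  define U where "U = (\<lambda>(p,q). vadd p q) ` (W0 \<times> W1)"
  have injU: "inj_on (\<lambda>(p,q). vadd p q) (W0 \<times> W1)"
  proof (rule inj_onI)
    fix x y assume x: "x \<in> W0 \<times> W1" and y: "y \<in> W0 \<times> W1"
      and e: "(\<lambda>(p,q). vadd p q) x = (\<lambda>(p,q). vadd p q) y"
    obtain p q where xp: "x = (p,q)" by (cases x)
    obtain p' q' where yp: "y = (p',q')" by (cases y)
    have e': "vadd p q = vadd p' q'" using e xp yp by simp
    have "vadd p p' = vadd q q'" using e' by (auto simp: vadd_def fun_eq_iff)
    moreover have "vadd p p' \<in> W0" using x y xp yp Vadd unfolding W0_def by auto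
    moreover have "vadd q q' \<in> W1" using x y xp yp Vadd unfolding W1_def by auto
    ultimately have "vadd p p' = vzero" "vadd q q' = vzero" using W01 by auto
    then show "x = y" using xp yp by (simp add: vadd_eq_zero_iff)
  qed
  have cU: "card U = 2 ^ k * 2 ^ l"
    unfolding U_def using card_image[OF injU] c0 c1 W0_def W1_def by (simp add: card_cartesian_product)
  have "card U < card (UNIV :: ('n \<Rightarrow> bool) set)"
    unfolding cU card_vec power_add[symmetric] using assms(7) by simp
  then obtain a where aU: "a \<notin> U" by (metis UNIV_I card_mono finite not_le subsetI)
  have Uadd: "vadd x y \<in> U" if xU: "x \<in> U" and yU: "y \<in> U" for x y
  proof -
    obtain p q where pq: "p \<in> W0" "q \<in> W1" "x = vadd p q" using xU unfolding U_def by auto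
    obtain p' q' where pq': "p' \<in> W0" "q' \<in> W1" "y = vadd p' q'" using yU unfolding U_def by auto
    have "vadd x y = vadd (vadd p p') (vadd q q')" using pq pq' vadd_swap4 by simp
    moreover have "vadd p p' \<in> W0" "vadd q q' \<in> W1" using pq pq' Vadd unfolding W0_def W1_def by auto
    ultimately show ?thesis unfolding U_def by force
  qed
  have W0U: "W0 \<subseteq> U"
  proof
    fix p assume "p \<in> W0"
    moreover have "vzero \<in> W1" using Vz W1_def by simp
    moreover have "p = vadd p vzero" by simp
    ultimately show "p \<in> U" unfolding U_def by force
  qed
  have W1U: "W1 \<subseteq> U"
  proof
    fix p assume "p \<in> W1"
    moreover have "vzero \<in> W0" using Vz W0_def by simp
    ultimately show "p \<in> U" unfolding U_def by (intro image_eqI[where x="(vzero,p)"]) auto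
  qed
  have zU: "vzero \<in> U" using W0U Vz W0_def by auto
  define A where "A = vadd a ` U"
  have cA: "card A = card U" unfolding A_def by (rule card_image) (auto simp: inj_on_def)
  have AnU: "x \<notin> U" if xA0: "x \<in> A" for x
  proof
    assume "x \<in> U"
    obtain u where u: "u \<in> U" "x = vadd a u" using xA0 unfolding A_def by auto
    have "vadd x u = a" using u by (auto simp: vadd_def fun_eq_iff)
    then show False using Uadd[OF \<open>x \<in> U\<close> u(1)] aU by simp
  qed
  have Anz: "x \<noteq> vzero" "x \<notin> W0" "x \<notin> W1" if "x \<in> A" for x
    using AnU[OF that] zU W0U W1U by auto
  define \<beta> where "\<beta> x = (SOME d. d \<noteq> vzero \<and> x \<in> Vb d)" for x
  have \<beta>: "\<beta> x \<noteq> vzero \<and> x \<in> Vb (\<beta> x)" if "x \<noteq> vzero" for x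
    unfolding \<beta>_def using someI_ex[OF ex[OF that]] .
  have \<beta>A: "\<beta> x \<noteq> b0" "\<beta> x \<noteq> b1" "\<beta> x \<in> NF F" if "x \<in> A" for x
  proof -
    have bx: "\<beta> x \<noteq> vzero" "x \<in> Vb (\<beta> x)" using \<beta> Anz[OF that] by auto
    show "\<beta> x \<noteq> b0" using bx Anz[OF that] W0_def by auto
    show "\<beta> x \<noteq> b1" using bx Anz[OF that] W1_def by auto
    have "{vzero, x} \<subseteq> Vb (\<beta> x)" using bx Vz by auto
    then have "card {vzero, x} \<le> card (Vb (\<beta> x))" by (intro card_mono) auto
    then have "card (Vb (\<beta> x)) \<noteq> 1" using Anz[OF that] by auto
    then show "\<beta> x \<in> NF F" using inNF bx by auto
  qed
  define Z where "Z = U - (W0 \<union> W1)"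
  have cW: "card (W0 \<union> W1) = 2 ^ k + 2 ^ l - 1"
  proof -
    have "card W0 + card W1 = card (W0 \<union> W1) + card (W0 \<inter> W1)" by (rule card_Un_Int) auto
    then show ?thesis using W01 c0 c1 W0_def W1_def by simp
  qed
  have cZ: "card Z + card (W0 \<union> W1) = card U"
    unfolding Z_def using W0U W1U by (metis card_Diff_subset card_mono finite le_add_diff_inverse2 Un_subset_iff)
  define BA where "BA = \<beta> ` A"
  define r where "r c = (SOME x. x \<in> A \<and> \<beta> x = c)" for c
  have r: "r c \<in> A \<and> \<beta> (r c) = c" if cB: "c \<in> BA" for c
  proof -
    have "\<exists>x. x \<in> A \<and> \<beta> x = c" using cB unfolding BA_def by auto
    then show ?thesis unfolding r_def by (rule someI_ex)
  qed
  define R where "R = r ` BA"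
  have RA: "R \<subseteq> A" unfolding R_def using r by auto
  have cR: "card R \<le> card BA" unfolding R_def by (rule card_image_le) simp
  define g where "g x = vadd x (r (\<beta> x))" for x
  have gprop: "g x \<noteq> vzero \<and> g x \<in> Vb (\<beta> x) \<and> g x \<in> Z" if x: "x \<in> A - R" for x
  proof -
    let ?c = "\<beta> x" and ?y = "r (\<beta> x)"
    have xA: "x \<in> A" using x by simp
    have cBA: "?c \<in> BA" using xA BA_def by simp
    have y: "?y \<in> A" "\<beta> ?y = ?c" using r[OF cBA] by auto
    have xy: "x \<noteq> ?y" using x cBA R_def by auto
    have bx: "?c \<noteq> vzero" "x \<in> Vb ?c" using \<beta> Anz[OF xA] by auto
    have "?y \<in> Vb (\<beta> ?y)" using \<beta> Anz[OF y(1)] by auto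
    then have yV: "?y \<in> Vb ?c" using y by simp
    have gV: "g x \<in> Vb ?c" unfolding g_def using Vadd[OF bx(2) yV] .
    have gz: "g x \<noteq> vzero" unfolding g_def using xy by (simp add: vadd_eq_zero_iff)
    obtain u where u: "u \<in> U" "x = vadd a u" using xA unfolding A_def by auto
    obtain u' where u': "u' \<in> U" "?y = vadd a u'" using y(1) unfolding A_def by auto
    have gU: "g x \<in> U" unfolding g_def using u u' Uadd[OF u(1) u'(1)] vadd_aa[of a u u'] by simp
    have g0: "g x \<notin> W0"
    proof
      assume "g x \<in> W0"
      then have "?c = b0" using dj[OF gz gV] bx b0 W0_def by auto
      then show False using \<beta>A[OF xA] by simp
    qed
    have g1: "g x \<notin> W1"
    proof
      assume "g x \<in> W1"
      then have "?c = b1" using dj[OF gz gV] bx b1 W1_def by auto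
      then show False using \<beta>A[OF xA] by simp
    qed
    show ?thesis using gz gV gU g0 g1 Z_def by auto
  qed
  have injg: "inj_on g (A - R)"
  proof (rule inj_onI)
    fix x x' assume x: "x \<in> A - R" and x': "x' \<in> A - R" and e: "g x = g x'"
    have "\<beta> x \<noteq> vzero" "\<beta> x' \<noteq> vzero" using \<beta> Anz x x' by auto
    then have "\<beta> x = \<beta> x'" using dj[of "g x" "\<beta> x" "\<beta> x'"] gprop[OF x] gprop[OF x'] e by auto
    then have "vadd x (r (\<beta> x)) = vadd x' (r (\<beta> x))" using e unfolding g_def by simp
    then show "x = x'" by (rule vadd_inj2)
  qed
  have "card (A - R) \<le> card Z"
    by (rule card_inj_on_le[OF injg]) (use gprop in auto)
  moreover have "card (A - R) = card A - card R" using RA by (simp add: card_Diff_subset)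
  moreover have "card R \<le> card A" using RA by (intro card_mono) auto
  ultimately have "card A \<le> card Z + card BA" using cR by linarith
  then have cBA: "2 ^ k + 2 ^ l - 1 \<le> card BA" using cA cZ cW by linarith
  have sub: "insert b0 (insert b1 BA) \<subseteq> NF F"
    using \<beta>A inNF b0 b1 cb0 cb1 BA_def by auto
  have nb0: "b0 \<notin> insert b1 BA" using \<beta>A b01 BA_def by auto
  have nb1: "b1 \<notin> BA" using \<beta>A BA_def by auto
  have "card (insert b0 (insert b1 BA)) = card BA + 2"
    using nb0 nb1 by simp
  moreover have "card (insert b0 (insert b1 BA)) \<le> card (NF F)" using sub by (intro card_mono) auto
  moreover have "(1::nat) \<le> 2 ^ k" by simp
  ultimately show ?thesis using cBA by linarith
qed

end
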